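(* Let $T=(t_{ij})$ be an $\mathbb{N}$-tableau of shape $\lambda$, let $\widehat{T}=(\widehat{t}_{ij})$ be its image under the toggle map, and let $U_T=(u_{ijk})$ be the array defined in the context. Let $(i,j)$ be a box of $\lambda$ and let $m$ be the unique natural number such that $(i+m,j+m)$ is a border box of $\lambda$. Then $\widehat{t}_{ij}=u_{i+m,j+m,m+1}$.
   Context: Partitions are drawn in English notation with matrix coordinates: the box in row $i$ and column $j$ is $(i,j)$. An $\mathbb{N}$-tableau of shape $\lambda$ is an assignment of a nonnegative integer to each box of $\lambda$. A border box of $\lambda$ is a box $(i,j)$ such that $(i+1,j+1)$ is not a box; a corner box is a box $(i,j)$ such that neither $(i+1,j)$ nor $(i,j+1)$ is a box. The toggle map $T\mapsto\widehat{T}$ is defined recursively: $\widehat{\emptyset}=\emptyset$; if $T'$ is obtained from $T$ by adding a corner box $(i,j)$ (of $\mathrm{sh}(T')$) with entry $x$, then $\widehat{T'}$ is obtained from $\widehat{T}$ as follows. For $k\ge1$ let $\beta_k,\gamma_k,\alpha_k$ be the entries of $\widehat{T}$ at $(i-k,j-k)$, $(i-k+1,j-k)$, $(i-k,j-k+1)$ respectively (taken to be $0$ if the box is not in $\mathrm{sh}(T)$). Then $\widehat{T'}$ agrees with $\widehat{T}$ except that for $1\le k<\min(i,j)$ the entry at $(i-k,j-k)$ becomes $\max(\alpha_{k+1},\gamma_{k+1})+\min(\alpha_k,\gamma_k)-\beta_k$, and the entry at $(i,j)$ is $\max(\alpha_1,\gamma_1)+x$. This is independent of the order in which boxes are added.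 The array $U_T=(u_{ijk})$ is indexed by all $(i,j,k)\in\mathbb{Z}^3$ such that $(i+a,j+b)$ is a box of $\lambda$ for some $a,b\in\{0,1,2\}$ and $0\le k\le\min(i,j)+1$. Its entries are: $u_{i,j,0}=0$ and $u_{i,j,\min(i,j)+1}=0$, and for $0<k<\min(i,j)+1$, \[u_{ijk}=\min(u_{i-1,j,k-1},u_{i,j-1,k-1})+\max(u_{i-1,j,k},u_{i,j-1,k})-u_{i-1,j-1,k-1}+t_{ijk},\] where $t_{ij1}=t_{ij}$ if $(i,j)\in\lambda$ (and $0$ otherwise) and $t_{ijk}=0$ for $k\ne1$. *)

theory Defs
  imports Main
begin

text \<open>Boxes are pairs (i,j) of positive naturals (row i, column j, English notation).
A partition (Young diagram) is a finite set of such boxes closed under moving up/left.\<close>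

definition is_partition :: "(nat \<times> nat) set \<Rightarrow> bool" where
  "is_partition L \<longleftrightarrow> finite L \<and> (\<forall>(i,j)\<in>L. 1 \<le> i \<and> 1 \<le> j) \<and>
     (\<forall>i j i' j'. (i,j) \<in> L \<and> 1 \<le> i' \<and> i' \<le> i \<and> 1 \<le> j' \<and> j' \<le> j \<longrightarrow> (i',j') \<in> L)"

definition border_box :: "(nat \<times> nat) set \<Rightarrow> nat \<Rightarrow> nat \<Rightarrow> bool" where
  "border_box L i j \<longleftrightarrow> (i,j) \<in> L \<and> (i+1, j+1) \<notin> L"

definition corner_box :: "(nat \<times> nat) set \<Rightarrow> nat \<Rightarrow> nat \<Rightarrow> bool" where
  "corner_box L i j \<longleftrightarrow> (i,j) \<in> L \<and> (i+1, j) \<notin> L \<and> (i, j+1) \<notin> L"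

text \<open>An N-tableau of shape L is a function T :: nat => nat => nat; only its values on boxes
of L matter.  Toggle images are functions H :: nat => nat => int which are 0 off the shape.\<close>

text \<open>One step of the toggle map: add the corner box (i,j) with entry x to the current image H.
For 1 <= k < min i j the entry at (a,b) = (i-k,j-k) becomes
max(alpha_(k+1), gamma_(k+1)) + min(alpha_k, gamma_k) - beta_k, where
alpha_(k+1) = H(a-1,b), gamma_(k+1) = H(a,b-1), alpha_k = H(a,b+1), gamma_k = H(a+1,b),
beta_k = H(a,b); and the entry at (i,j) becomes max(H(i-1,j), H(i,j-1)) + x.\<close>

definition toggle_step :: "(nat \<Rightarrow> nat \<Rightarrow> int) \<Rightarrow> nat \<Rightarrow> nat \<Rightarrow> nat \<Rightarrow> (nat \<Rightarrow> nat \<Rightarrow> int)" where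
  "toggle_step H i j x = (\<lambda>a b.
     if a = i \<and> b = j then max (H (i-1) j) (H i (j-1)) + int x
     else if 1 \<le> a \<and> 1 \<le> b \<and> a < i \<and> b < j \<and> i - a = j - b
     then max (H (a-1) b) (H a (b-1)) + min (H a (b+1)) (H (a+1) b) - H a b
     else H a b)"

inductive toggles :: "(nat \<times> nat) set \<Rightarrow> (nat \<Rightarrow> nat \<Rightarrow> nat) \<Rightarrow> (nat \<Rightarrow> nat \<Rightarrow> int) \<Rightarrow> bool" where
  empty: "toggles {} T (\<lambda>_ _. 0)"
| add: "toggles S T H \<Longrightarrow> (i,j) \<notin> S \<Longrightarrow> is_partition (insert (i,j) S) \<Longrightarrow>
        corner_box (insert (i,j) S) i j \<Longrightarrow> toggles (insert (i,j) S) T (toggle_step H i j (T i j))"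

text \<open>Indices with i or j equal to 0 (or negative) only carry boundary values 0;
u i j 0 = 0, u i j k = 0 for k > min i j (in particular k = min i j + 1), and for
0 < k <= min i j the recursion from the paper, with t_{ij1} = t_ij on boxes of L.\<close>

function uarr :: "(nat \<times> nat) set \<Rightarrow> (nat \<Rightarrow> nat \<Rightarrow> nat) \<Rightarrow> nat \<Rightarrow> nat \<Rightarrow> nat \<Rightarrow> int" where
  "uarr L T i j k =
    (if k = 0 \<or> min i j < k then 0
     else min (uarr L T (i-1) j (k-1)) (uarr L T i (j-1) (k-1))
        + max (uarr L T (i-1) j k) (uarr L T i (j-1) k)
        - uarr L T (i-1) (j-1) (k-1)
        + (if k = 1 \<and> (i,j) \<in> L then int (T i j) else 0))"
  by pat_completeness auto
termination by (relation "measure (\<lambda>(L,T,i,j,k). i+j)") auto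

end

theory Submission
  imports Defs
begin

declare uarr.simps[simp del]

lemma uarr_0[simp]: "uarr L T i j 0 = 0"
  by (subst uarr.simps) simp

lemma uarr_big: "min i j < k \<Longrightarrow> uarr L T i j k = 0"
  by (subst uarr.simps) simp

lemma uarr_local:
  "(\<And>p q. p \<le> i \<Longrightarrow> q \<le> j \<Longrightarrow> (p,q)\<in>L \<longleftrightarrow> (p,q)\<in>L') \<Longrightarrow> uarr L T i j k = uarr L' T i j k"
proof (induction L T i j k rule: uarr.induct)
  case (1 L T i j k)
  show ?case
  proof (cases "k = 0 \<or> min i j < k")
    case True
    then show ?thesis by (simp only: uarr.simps[of L T i j k] uarr.simps[of L' T i j k]) simp
  next
    case False
    have a: "uarr L T (i-1) j (k-1) = uarr L' T (i-1) j (k-1)"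
      using 1 False by (meson diff_le_self le_trans)
    have b: "uarr L T i (j-1) (k-1) = uarr L' T i (j-1) (k-1)"
      using 1 False by (meson diff_le_self le_trans)
    have c: "uarr L T (i-1) j k = uarr L' T (i-1) j k"
      using 1 False by (meson diff_le_self le_trans)
    have d: "uarr L T i (j-1) k = uarr L' T i (j-1) k"
      using 1 False by (meson diff_le_self le_trans)
    have e: "uarr L T (i-1) (j-1) (k-1) = uarr L' T (i-1) (j-1) (k-1)"
      using 1 False by (meson diff_le_self le_trans)
    have f: "(i,j)\<in>L \<longleftrightarrow> (i,j)\<in>L'" using 1 by simp
    show ?thesis
      by (simp only: uarr.simps[of L T i j k] uarr.simps[of L' T i j k] a b c d e f)
  qed
qed

lemma toggles_partition: "toggles S T H \<Longrightarrow> is_partition S"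
  apply (erule toggles.cases)
   apply (simp add: is_partition_def)
  apply simp
  done

lemma border_unique:
  assumes "is_partition L" "border_box L (a+m) (b+m)" "border_box L (a+n) (b+n)"
  shows "m = n"
proof (rule ccontr)
  assume "m \<noteq> n"
  then consider "m < n" | "n < m" by linarith
  then show False
  proof cases
    case 1
    have "(a+m+1, b+m+1) \<in> L"
    proof -
      have c: "\<forall>i j i' j'. (i,j) \<in> L \<and> 1 \<le> i' \<and> i' \<le> i \<and> 1 \<le> j' \<and> j' \<le> j \<longrightarrow> (i',j') \<in> L"
        using assms(1) unfolding is_partition_def by blast
      have "(a+n, b+n) \<in> L" using assms(3) by (simp add: border_box_def)
      then show ?thesis using c[rule_format, of "a+n" "b+n" "a+m+1" "b+m+1"] 1 by simp
    qed
    then show False using assms(2) by (simp add: border_box_def)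
  next
    case 2
    have "(a+n+1, b+n+1) \<in> L"
    proof -
      have c: "\<forall>i j i' j'. (i,j) \<in> L \<and> 1 \<le> i' \<and> i' \<le> i \<and> 1 \<le> j' \<and> j' \<le> j \<longrightarrow> (i',j') \<in> L"
        using assms(1) unfolding is_partition_def by blast
      have "(a+m, b+m) \<in> L" using assms(2) by (simp add: border_box_def)
      then show ?thesis using c[rule_format, of "a+m" "b+m" "a+n+1" "b+n+1"] 2 by simp
    qed
    then show False using assms(3) by (simp add: border_box_def)
  qed
qed

definition tinv :: "(nat \<times> nat) set \<Rightarrow> (nat \<Rightarrow> nat \<Rightarrow> nat) \<Rightarrow> (nat \<Rightarrow> nat \<Rightarrow> int) \<Rightarrow> bool" where
  "tinv S T H \<longleftrightarrow> (\<forall>b. H 0 b = 0 \<and> H b 0 = 0) \<and>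
     (\<forall>a b m. (a,b)\<in>S \<longrightarrow> border_box S (a+m) (b+m) \<longrightarrow> H a b = uarr S T (a+m) (b+m) (m+1))"

lemma main: "toggles S T H \<Longrightarrow> tinv S T H"
proof (induction rule: toggles.induct)
  case (empty T)
  then show ?case by (simp add: tinv_def)
next
  case (add S T H i j)
  let ?S' = "insert (i,j) S"
  let ?H' = "toggle_step H i j (T i j)"
  have pS: "is_partition S" using add.hyps(1) by (rule toggles_partition)
  have pS': "is_partition ?S'" by fact
  have cor: "corner_box ?S' i j" by fact
  have ij1: "1 \<le> i" "1 \<le> j" using pS' unfolding is_partition_def by auto
  have IH0: "\<And>b. H 0 b = 0" "\<And>b. H b 0 = 0" using add.IH unfolding tinv_def by auto
  have IH: "\<And>a b m. (a,b)\<in>S \<Longrightarrow> border_box S (a+m) (b+m) \<Longrightarrow> H a b = uarr S T (a+m) (b+m) (m+1)"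
    using add.IH unfolding tinv_def by auto
  have clos: "\<And>p q p' q'. (p,q) \<in> ?S' \<Longrightarrow> 1 \<le> p' \<Longrightarrow> p' \<le> p \<Longrightarrow> 1 \<le> q' \<Longrightarrow> q' \<le> q \<Longrightarrow> (p',q') \<in> ?S'"
    using pS' unfolding is_partition_def by blast
  have closS: "\<And>p q p' q'. (p,q) \<in> S \<Longrightarrow> 1 \<le> p' \<Longrightarrow> p' \<le> p \<Longrightarrow> 1 \<le> q' \<Longrightarrow> q' \<le> q \<Longrightarrow> (p',q') \<in> S"
    using pS unfolding is_partition_def by blast
  have pos: "\<And>p q. (p,q) \<in> ?S' \<Longrightarrow> 1 \<le> p \<and> 1 \<le> q"
    using pS' unfolding is_partition_def by blast
  have n1: "(i+1,j) \<notin> ?S'" "(i,j+1) \<notin> ?S'" using cor unfolding corner_box_def by auto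
  have loc: "uarr S T p q k = uarr ?S' T p q k" if "\<not> (i \<le> p \<and> j \<le> q)" for p q k
    by (rule uarr_local) (use that in auto)
  have Z: "\<forall>b. ?H' 0 b = 0 \<and> ?H' b 0 = 0"
    using ij1 IH0 by (auto simp: toggle_step_def)
  have M: "?H' a b = uarr ?S' T (a+m) (b+m) (m+1)"
    if ab: "(a,b) \<in> ?S'" and bb: "border_box ?S' (a+m) (b+m)" for a b m
  proof -
    have a1: "1 \<le> a" "1 \<le> b" using pos[OF ab] by auto
    have "\<not> (a > i \<and> a + j = b + i)"
    proof
      assume h: "a > i \<and> a + j = b + i"
      then have "(i+1,j) \<in> ?S'" using clos[OF ab, of "i+1" j] ij1 by auto
      then show False using n1 by blast
    qed
    then consider (off) "a + j \<noteq> b + i" | (eq) "a = i" "b = j" | (diag) "a + j = b + i" "a < i"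
      by linarith
    then show ?thesis
    proof cases
      case off
      have H': "?H' a b = H a b" using off by (auto simp: toggle_step_def)
      have abS: "(a,b) \<in> S" using ab off by auto
      have bbS: "border_box S (a+m) (b+m)" using bb off ij1 by (auto simp: border_box_def)
      have nr: "\<not> (i \<le> a+m \<and> j \<le> b+m)"
      proof
        assume h: "i \<le> a+m \<and> j \<le> b+m"
        have inS': "(a+m, b+m) \<in> ?S'" using bb by (simp add: border_box_def)
        show False
        proof (cases "i < a+m")
          case True
          then have "(i+1,j) \<in> ?S'" using clos[OF inS', of "i+1" j] h ij1 by auto
          then show False using n1 by blast
        next
          case False
          then have "i = a+m" using h by auto
          then have "j < b+m" using off h by auto
          then have "(i,j+1) \<in> ?S'" using clos[OF inS', of i "j+1"] h ij1 by auto
          then show False using n1 by blast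
        qed
      qed
      show ?thesis using H' IH[OF abS bbS] loc[OF nr] by simp
    next
      case eq
      have m0: "m = 0"
      proof (rule ccontr)
        assume "m \<noteq> 0"
        have inS': "(a+m, b+m) \<in> ?S'" using bb by (simp add: border_box_def)
        have "(i+1,j) \<in> ?S'" using clos[OF inS', of "i+1" j] eq ij1 \<open>m \<noteq> 0\<close> by auto
        then show False using n1 by blast
      qed
      have H': "?H' a b = max (H (i-1) j) (H i (j-1)) + int (T i j)"
        using eq by (simp add: toggle_step_def)
      have U: "uarr ?S' T i j 1 = max (uarr ?S' T (i-1) j 1) (uarr ?S' T i (j-1) 1) + int (T i j)"
        using ij1 by (subst uarr.simps) (simp add: min_def)
      have A: "H (i-1) j = uarr ?S' T (i-1) j 1"
      proof (cases "i = 1")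
        case True
        then show ?thesis using IH0 by (subst uarr.simps) simp
      next
        case False
        have inS: "(i-1,j) \<in> S" proof -
          have "1 \<le> i-1" "i-1 \<noteq> i" "i-1 \<le> i" using False ij1 by auto
          then show ?thesis using clos[of i j "i-1" j] ij1 by auto
        qed
        have "border_box S (i-1+0) (j+0)" using inS n1 False ij1 by (auto simp: border_box_def)
        from IH[OF inS this] loc[of "i-1" j 1] ij1 show ?thesis by simp
      qed
      have B: "H i (j-1) = uarr ?S' T i (j-1) 1"
      proof (cases "j = 1")
        case True
        then show ?thesis using IH0 by (subst uarr.simps) simp
      next
        case False
        have inS: "(i,j-1) \<in> S" proof -
          have "1 \<le> j-1" "j-1 \<noteq> j" "j-1 \<le> j" using False ij1 by auto
          then show ?thesis using clos[of i j i "j-1"] ij1 by auto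
        qed
        have "border_box S (i+0) (j-1+0)" using inS n1 False ij1 by (auto simp: border_box_def)
        from IH[OF inS this] loc[of i "j-1" 1] ij1 show ?thesis by simp
      qed
      show ?thesis using H' U A B eq m0 by simp
    next
      case diag
      define k where "k = i - a"
      have k1: "1 \<le> k" and ia: "i = a + k" and jb: "j = b + k" using diag unfolding k_def by auto
      have bbk: "border_box ?S' (a+k) (b+k)"
      proof -
        have "(i+1,j+1) \<notin> ?S'"
        proof
          assume "(i+1,j+1) \<in> ?S'"
          then have "(i+1,j) \<in> ?S'" using clos[of "i+1" "j+1" "i+1" j] ij1 by auto
          then show False using n1 by blast
        qed
        then show ?thesis using ia jb by (simp add: border_box_def)
      qed
      have mk: "m = k" by (rule border_unique[OF pS' bb bbk])
      have H': "?H' a b = max (H (a-1) b) (H a (b-1)) + min (H a (b+1)) (H (a+1) b) - H a b"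
        using diag a1 ia jb by (simp add: toggle_step_def)
      have U: "uarr ?S' T i j (k+1) = min (uarr ?S' T (i-1) j k) (uarr ?S' T i (j-1) k)
          + max (uarr ?S' T (i-1) j (k+1)) (uarr ?S' T i (j-1) (k+1)) - uarr ?S' T (i-1) (j-1) k"
        using ia jb a1 k1 by (subst uarr.simps) (simp add: min_def)
      have nij: "(i,j) \<notin> S" by fact
      have i1S: "(i-1,j) \<in> S" proof -
          have "1 \<le> i-1" "i-1 \<noteq> i" "i-1 \<le> i" using ia a1 k1 by auto
          then show ?thesis using clos[of i j "i-1" j] ij1 by auto
        qed
      have j1S: "(i,j-1) \<in> S" proof -
          have "1 \<le> j-1" "j-1 \<noteq> j" "j-1 \<le> j" using jb a1 k1 by auto
          then show ?thesis using clos[of i j i "j-1"] ij1 by auto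
        qed
      have abS: "(a,b) \<in> S" using ab diag by auto
      have bx1: "border_box S (i-1) j" using i1S n1 ij1 by (auto simp: border_box_def)
      have bx2: "border_box S i (j-1)" using j1S n1 ij1 by (auto simp: border_box_def)
      have ij11: "(i-1,j-1) \<in> S" using closS[OF i1S, of "i-1" "j-1"] ia jb a1 k1 by auto
      have bx3: "border_box S (i-1) (j-1)" using ij11 nij ij1 by (auto simp: border_box_def)
      have E1: "H a (b+1) = uarr ?S' T (i-1) j k"
      proof -
        have inS: "(a,b+1) \<in> S" using closS[OF i1S, of a "b+1"] ia jb a1 k1 by auto
        have e: "a+(k-1) = i-1" "b+1+(k-1) = j" using ia jb k1 by auto
        have "border_box S (a+(k-1)) (b+1+(k-1))" unfolding e using bx1 .
        from IH[OF inS this, unfolded e] loc[of "i-1" j k] ia jb k1 ij1 show ?thesis by simp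
      qed
      have E2: "H (a+1) b = uarr ?S' T i (j-1) k"
      proof -
        have inS: "(a+1,b) \<in> S" using closS[OF j1S, of "a+1" b] ia jb a1 k1 by auto
        have e: "a+1+(k-1) = i" "b+(k-1) = j-1" using ia jb k1 by auto
        have "border_box S (a+1+(k-1)) (b+(k-1))" unfolding e using bx2 .
        from IH[OF inS this, unfolded e] loc[of i "j-1" k] ia jb k1 ij1 show ?thesis by simp
      qed
      have E3: "H a b = uarr ?S' T (i-1) (j-1) k"
      proof -
        have e: "a+(k-1) = i-1" "b+(k-1) = j-1" using ia jb k1 by auto
        have "border_box S (a+(k-1)) (b+(k-1))" unfolding e using bx3 .
        from IH[OF abS this, unfolded e] loc[of "i-1" "j-1" k] ia jb k1 ij1 show ?thesis by simp
      qed
      have E4: "H (a-1) b = uarr ?S' T (i-1) j (k+1)"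
      proof (cases "a = 1")
        case True
        have "uarr ?S' T (i-1) j (k+1) = 0" by (rule uarr_big) (use ia True in simp)
        then show ?thesis using IH0 True by simp
      next
        case False
        have inS: "(a-1,b) \<in> S" using closS[OF i1S, of "a-1" b] ia jb a1 k1 False by auto
        have e: "a-1+k = i-1" "b+k = j" using ia jb k1 a1 by auto
        have "border_box S (a-1+k) (b+k)" unfolding e using bx1 .
        from IH[OF inS this, unfolded e] loc[of "i-1" j "k+1"] ia jb k1 False ij1 show ?thesis by simp
      qed
      have E5: "H a (b-1) = uarr ?S' T i (j-1) (k+1)"
      proof (cases "b = 1")
        case True
        have "uarr ?S' T i (j-1) (k+1) = 0" by (rule uarr_big) (use jb True in simp)
        then show ?thesis using IH0 True by simp
      next
        case False
        have inS: "(a,b-1) \<in> S" using closS[OF j1S, of a "b-1"] ia jb a1 k1 False by auto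
        have e: "a+k = i" "b-1+k = j-1" using ia jb k1 a1 by auto
        have "border_box S (a+k) (b-1+k)" unfolding e using bx2 .
        from IH[OF inS this, unfolded e] loc[of i "j-1" "k+1"] ia jb k1 False ij1 show ?thesis by simp
      qed
      show ?thesis using H' U E1 E2 E3 E4 E5 mk ia jb by simp
    qed
  qed
  show ?case unfolding tinv_def using Z M by blast
qed

theorem proposition4p2:
  fixes L :: "(nat \<times> nat) set" and T :: "nat \<Rightarrow> nat \<Rightarrow> nat" and H :: "nat \<Rightarrow> nat \<Rightarrow> int"
    and i j m :: nat
  assumes "is_partition L"
    and "toggles L T H"
    and "(i, j) \<in> L"
    and "border_box L (i + m) (j + m)"
  shows "H i j = uarr L T (i + m) (j + m) (m + 1)"
  using main[OF assms(2)] assms(3,4) unfolding tinv_def by blast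

end
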